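(* Consider Algorithm B on an input whose optimal offline makespan is $1$, and suppose job $j$ is handled by Step 5 with $p_j+p^{\max Y}_j\le 1.25$. Let $\gamma_j=y_{j-1}+p_j-1.25$. Then the set $W$ chosen in Step 5 satisfies $\gamma_j\le w_j\le 0.75\,p_j$ and $w_j<0.5$; after $j$ is handled both machine loads are at most $1.25$; and if afterwards $m_1$ receives only jobs of GoS $1$, its load remains at most $1.25$.
   Context: Model (two hierarchical machines with migration). Jobs $1,2,\dots,n$ arrive one by one. Job $j$ has a size $p_j>0$ and a grade of service (GoS) $g_j\in\{1,2\}$; a job of GoS $1$ may only be processed on machine $m_1$, a job of GoS $2$ on $m_1$ or $m_2$. When job $j$ arrives, the algorithm assigns it and may migrate previously arrived jobs of total size at most $M\cdot p_j$. Bin stretching: the optimal offline makespan of the complete input is $1$ and is known in advance. Notation: $Y_{j}$ is the set of jobs on $m_2$ just after job $j$ has been handled (including migrations), $y_j$ its total size, $y_0=0$. $p^{\max Y}_j$ and $p^{\max Y,2}_j$ are the largest and second largest sizes of jobs in $Y_{j-1}$ (each defined as $0$ if it does not exist), and $j^{\max Y}$ is a job of $Y_{j-1}$ of size $p^{\max Y}_j$. "Sorted $Y_{j-1}$" means the jobs of $Y_{j-1}$ listed in non-increasing order of size; $w_j$ denotes the total size of the set $W$ chosen when handling $j$. Algorithm B. On arrival of job $j$: Step 2: if $g_j=1$ or $y_{j-1}\ge 0.75$, assign $j$ to $m_1$. Step 3: else if $y_{j-1}+p_j\le 1.25$, assign $j$ to $m_2$. Step 4: else if $p_j\ge 0.75$: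 let $W$ be the longest prefix of sorted $Y_{j-1}$ with total size at most $0.75p_j$ (possibly empty). If $y_{j-1}-w_j+p_j>1.25$, assign $j$ to $m_1$ (no migration); otherwise migrate the jobs of $W$ to $m_1$ and assign $j$ to $m_2$. Step 5: else (so $p_j<0.75$): if $p_j+p^{\max Y}_j>1.25$, assign $j$ to $m_1$. Otherwise choose $W$ as follows: if $p^{\max Y}_j\ge y_{j-1}/2$, let $W=Y_{j-1}\setminus\{j^{\max Y}\}$; if $0.25\le p^{\max Y}_j<y_{j-1}/2$, let $W=\{j^{\max Y}\}$; if $p^{\max Y}_j<0.25$, let $W$ be the shortest prefix of sorted $Y_{j-1}$ with total size at least $0.25$ (or all of $Y_{j-1}$ if none exists), and if then $w_j>0.75p_j$ replace $W$ by $Y_{j-1}\setminus W$. Migrate the jobs of $W$ to $m_1$ and assign $j$ to $m_2$. *)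

theory Defs
  imports Main "HOL.Real"
begin

text \<open>Jobs are numbered 1..n.  p i is the size, g i the grade of service (1 or 2).
  A state of the algorithm is the set Y of jobs currently on machine m2; the jobs on m1
  after job j has been handled are the remaining arrived jobs {1..j} - Y.\<close>

definition load :: "(nat \<Rightarrow> real) \<Rightarrow> nat set \<Rightarrow> real" where
  "load p S = (\<Sum>i\<in>S. p i)"

text \<open>Optimal offline makespan of jobs 1..n: S is the set of jobs put on m2
  (only GoS 2 jobs allowed there).\<close>
definition opt_makespan :: "(nat \<Rightarrow> real) \<Rightarrow> (nat \<Rightarrow> nat) \<Rightarrow> nat \<Rightarrow> real" where
  "opt_makespan p g n =
     Min {max (load p ({1..n} - S)) (load p S) | S. S \<subseteq> {1..n} \<and> (\<forall>i\<in>S. g i = 2)}"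

definition sorted_listing :: "(nat \<Rightarrow> real) \<Rightarrow> nat set \<Rightarrow> nat list \<Rightarrow> bool" where
  "sorted_listing p Y L \<longleftrightarrow> distinct L \<and> set L = Y \<and> sorted_wrt (\<lambda>a b. p b \<le> p a) L"

definition pmaxY :: "(nat \<Rightarrow> real) \<Rightarrow> nat set \<Rightarrow> real" where
  "pmaxY p Y = (if Y = {} then 0 else Max (p ` Y))"

definition step4_W :: "(nat \<Rightarrow> real) \<Rightarrow> nat list \<Rightarrow> real \<Rightarrow> nat set" where
  "step4_W p L pj =
     set (take (GREATEST k. k \<le> length L \<and> sum_list (map p (take k L)) \<le> 0.75 * pj) L)"

definition step5_prefix :: "(nat \<Rightarrow> real) \<Rightarrow> nat list \<Rightarrow> nat set" where
  "step5_prefix p L =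
     (if \<exists>k. sum_list (map p (take k L)) \<ge> 0.25
      then set (take (LEAST k. sum_list (map p (take k L)) \<ge> 0.25) L)
      else set L)"

definition step5_choice :: "(nat \<Rightarrow> real) \<Rightarrow> nat \<Rightarrow> nat set \<Rightarrow> nat set \<Rightarrow> bool" where
  "step5_choice p j Yp W \<longleftrightarrow>
     (let pm = pmaxY p Yp; y = load p Yp in
      \<exists>jm\<in>Yp. p jm = pm \<and>
        (if pm \<ge> y / 2 then W = Yp - {jm}
         else if pm \<ge> 0.25 then W = {jm}
         else (\<exists>L. sorted_listing p Yp L \<and>
                 (let W1 = step5_prefix p L in
                  W = (if load p W1 > 0.75 * p j then Yp - W1 else W1)))))"

text \<open>One step of Algorithm B: handling job j turns the m2-set Yp into Yn, migrating the set W
  from m2 to m1 (W = {} when there is no migration).\<close>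
definition B_step :: "(nat \<Rightarrow> real) \<Rightarrow> (nat \<Rightarrow> nat) \<Rightarrow> nat \<Rightarrow> nat set \<Rightarrow> nat set \<Rightarrow> nat set \<Rightarrow> bool" where
  "B_step p g j Yp W Yn \<longleftrightarrow>
     (let y = load p Yp in
      if g j = 1 \<or> y \<ge> 0.75 then W = {} \<and> Yn = Yp
      else if y + p j \<le> 1.25 then W = {} \<and> Yn = insert j Yp
      else if p j \<ge> 0.75 then
        (\<exists>L. sorted_listing p Yp L \<and>
           (let W0 = step4_W p L (p j) in
            if y - load p W0 + p j > 1.25 then W = {} \<and> Yn = Yp
            else W = W0 \<and> Yn = insert j (Yp - W0)))
      else if p j + pmaxY p Yp > 1.25 then W = {} \<and> Yn = Yp
      else step5_choice p j Yp W \<and> Yn = insert j (Yp - W))"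

text \<open>A run of Algorithm B on jobs 1..n: Y k is the set of jobs on m2 after job k
  has been handled, Wm k the set migrated when handling job k.\<close>
definition B_run :: "(nat \<Rightarrow> real) \<Rightarrow> (nat \<Rightarrow> nat) \<Rightarrow> nat \<Rightarrow> (nat \<Rightarrow> nat set) \<Rightarrow> (nat \<Rightarrow> nat set) \<Rightarrow> bool" where
  "B_run p g n Y Wm \<longleftrightarrow> Y 0 = {} \<and> (\<forall>k\<in>{1..n}. B_step p g k (Y (k - 1)) (Wm k) (Y k))"

end

theory Submission
  imports Defs
begin

lemma step_basic:
  assumes "B_step p g k Yp W Yn"
  shows "Yn \<subseteq> insert k Yp \<and> (g k = 1 \<longrightarrow> Yn = Yp)"
  using assms unfolding B_step_def Let_def
  by (auto split: if_splits)

lemma step5_W: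
  fixes p :: "nat \<Rightarrow> real"
  assumes fin: "finite Yp"
    and y1: "load p Yp < 0.75" and y2: "load p Yp + p j > 1.25"
    and pj: "p j < 0.75" and pm: "p j + pmaxY p Yp \<le> 1.25"
    and ch: "step5_choice p j Yp W"
  shows "W \<subseteq> Yp \<and> load p Yp + p j - 1.25 \<le> load p W \<and> load p W \<le> 0.75 * p j \<and> load p W < 0.5"
proof -
  define y where "y = load p Yp"
  define pmx where "pmx = pmaxY p Yp"
  have ne: "Yp \<noteq> {}" using y1 y2 pj by (auto simp: load_def)
  have pmx_eq: "pmx = Max (p ` Yp)" using ne by (simp add: pmx_def pmaxY_def)
  have le_pm: "\<And>i. i \<in> Yp \<Longrightarrow> p i \<le> pmx" using fin pmx_eq by simp
  have ldiff: "\<And>B. B \<subseteq> Yp \<Longrightarrow> load p (Yp - B) = y - load p B"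
    using fin by (simp add: load_def y_def sum_diff)
  obtain jm where jm: "jm \<in> Yp" "p jm = pmx"
    and c: "if pmx \<ge> y / 2 then W = Yp - {jm}
         else if pmx \<ge> 0.25 then W = {jm}
         else (\<exists>L. sorted_listing p Yp L \<and>
                 (let W1 = step5_prefix p L in
                  W = (if load p W1 > 0.75 * p j then Yp - W1 else W1)))"
    using ch unfolding step5_choice_def Let_def pmx_def y_def by blast
  show ?thesis
  proof (cases "pmx \<ge> y / 2")
    case True
    then have W: "W = Yp - {jm}" using c by simp
    have "load p W = y - pmx" using ldiff[of "{jm}"] jm W by (simp add: load_def)
    then show ?thesis using W True y1 y2 pj pm unfolding y_def pmx_def by auto
  next
    case F1: False
    show ?thesis
    proof (cases "pmx \<ge> 0.25")
      case True
      then have W: "W = {jm}" using c F1 by simp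
      have "load p W = pmx" using jm W by (simp add: load_def)
      then show ?thesis using W True F1 jm y1 y2 pj pm unfolding y_def pmx_def by auto
    next
      case F2: False
      then obtain L where L: "sorted_listing p Yp L"
        and W: "W = (if load p (step5_prefix p L) > 0.75 * p j then Yp - step5_prefix p L
                     else step5_prefix p L)"
        using c F1 unfolding Let_def by auto
      have dist: "distinct L" and setL: "set L = Yp" using L by (auto simp: sorted_listing_def)
      have sl: "\<And>k. sum_list (map p (take k L)) = load p (set (take k L))"
        using dist by (simp add: load_def sum_list_distinct_conv_sum_set)
      have yL: "sum_list (map p (take (length L) L)) = y"
        using sl[of "length L"] setL by (simp add: y_def)
      have ex: "\<exists>k. sum_list (map p (take k L)) \<ge> 0.25"
        using yL y2 pj unfolding y_def by (intro exI[of _ "length L"]) simp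
      define k0 where "k0 = (LEAST k. sum_list (map p (take k L)) \<ge> 0.25)"
      have W1: "step5_prefix p L = set (take k0 L)"
        using ex by (simp add: step5_prefix_def k0_def)
      have k0a: "sum_list (map p (take k0 L)) \<ge> 0.25"
        unfolding k0_def using ex by (rule LeastI_ex)
      have k0pos: "k0 \<noteq> 0" using k0a by (cases k0) auto
      have k0b: "\<not> sum_list (map p (take (k0 - 1) L)) \<ge> 0.25"
      proof -
        have "k0 - 1 < k0" using k0pos by simp
        note this[unfolded k0_def]
        then show ?thesis unfolding k0_def by (rule not_less_Least)
      qed
      have k0len: "k0 - 1 < length L"
      proof (rule ccontr)
        assume "\<not> k0 - 1 < length L"
        then have "take (k0 - 1) L = L" by simp
        then show False using k0b yL y2 pj unfolding y_def by simp
      qed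
      have tk: "take k0 L = take (k0 - 1) L @ [L ! (k0 - 1)]"
        using take_Suc_conv_app_nth[OF k0len] k0pos by (metis Suc_pred' not_gr0)
      have "L ! (k0 - 1) \<in> Yp" using k0len setL nth_mem by blast
      then have "p (L ! (k0 - 1)) < 0.25" using le_pm[of "L ! (k0 - 1)"] F2 by linarith
      then have w1b: "load p (set (take k0 L)) < 0.5" using tk k0b sl[of k0] by simp
      have w1a: "load p (set (take k0 L)) \<ge> 0.25" using k0a sl by simp
      have sub: "set (take k0 L) \<subseteq> Yp" using setL set_take_subset by metis
      show ?thesis
      proof (cases "load p (set (take k0 L)) > 0.75 * p j")
        case True
        then have WW: "W = Yp - set (take k0 L)" using W W1 by simp
        then have "load p W = y - load p (set (take k0 L))" using ldiff[OF sub] by simp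
        moreover have "W \<subseteq> Yp" using WW by blast
        ultimately show ?thesis using True w1b y1 y2 pj unfolding y_def
          by auto
      next
        case False
        then have WW: "W = set (take k0 L)" using W W1 by simp
        show ?thesis unfolding WW using sub False w1a w1b y1 y2 pj
          by auto
      qed
    qed
  qed
qed


lemma total_le2:
  fixes p :: "nat \<Rightarrow> real"
  assumes opt: "opt_makespan p g n = 1"
  shows "load p {1..n} \<le> 2"
proof -
  define F where "F = (\<lambda>S. max (load p ({1..n} - S)) (load p S))"
  define C where "C = {S. S \<subseteq> {1..n} \<and> (\<forall>i\<in>S. g i = 2)}"
  have eq: "{max (load p ({1..n} - S)) (load p S) | S. S \<subseteq> {1..n} \<and> (\<forall>i\<in>S. g i = 2)} = F ` C"
    unfolding F_def C_def by blast
  have fin: "finite C" unfolding C_def by (rule finite_subset[of _ "Pow {1..n}"]) auto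
  have ne: "C \<noteq> {}" unfolding C_def by auto
  have "Min (F ` C) = 1" using opt eq unfolding opt_makespan_def by simp
  moreover have "Min (F ` C) \<in> F ` C" using fin ne by (intro Min_in) auto
  ultimately obtain S where S: "S \<in> C" "F S = 1" by force
  have "load p {1..n} = load p ({1..n} - S) + load p S"
    using S(1) unfolding load_def C_def by (intro sum.subset_diff) auto
  then show ?thesis using S(2) unfolding F_def by linarith
qed

lemma load_mono:
  fixes p :: "nat \<Rightarrow> real"
  assumes "finite B" "A \<subseteq> B" "\<forall>i\<in>B. p i > 0"
  shows "load p A \<le> load p B"
  unfolding load_def using assms by (intro sum_mono2) auto

theorem mainTheorem8:
  fixes p :: "nat \<Rightarrow> real" and g :: "nat \<Rightarrow> nat" and n j :: nat
    and Y Wm :: "nat \<Rightarrow> nat set"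
  assumes pos: "\<forall>i\<in>{1..n}. p i > 0"
    and gos: "\<forall>i\<in>{1..n}. g i = 1 \<or> g i = 2"
    and opt: "opt_makespan p g n = 1"
    and run: "B_run p g n Y Wm"
    and j: "j \<in> {1..n}"
    and step5: "g j = 2" "load p (Y (j - 1)) < 0.75" "load p (Y (j - 1)) + p j > 1.25"
      "p j < 0.75" "p j + pmaxY p (Y (j - 1)) \<le> 1.25"
  shows "load p (Y (j - 1)) + p j - 1.25 \<le> load p (Wm j)
       \<and> load p (Wm j) \<le> 0.75 * p j
       \<and> load p (Wm j) < 0.5
       \<and> load p ({1..j} - Y j) \<le> 1.25
       \<and> load p (Y j) \<le> 1.25
       \<and> (\<forall>j'. j \<le> j' \<and> j' \<le> n \<and>
              (\<forall>k\<in>{j<..j'}. ({1..k} - Y k) - ({1..k - 1} - Y (k - 1)) \<subseteq> {i. g i = 1})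
              \<longrightarrow> load p ({1..j'} - Y j') \<le> 1.25)"
proof -
  have Y0: "Y 0 = {}" and steps: "\<And>k. k \<in> {1..n} \<Longrightarrow> B_step p g k (Y (k - 1)) (Wm k) (Y k)"
    using run unfolding B_run_def by auto
  have inv: "Y k \<subseteq> {1..k} \<and> (\<forall>i\<in>Y k. g i = 2)" if "k \<le> n" for k
    using that
  proof (induction k)
    case 0
    then show ?case using Y0 by simp
  next
    case (Suc k)
    have st: "B_step p g (Suc k) (Y k) (Wm (Suc k)) (Y (Suc k))"
      using steps[of "Suc k"] Suc.prems by simp
    have IH: "Y k \<subseteq> {1..k} \<and> (\<forall>i\<in>Y k. g i = 2)" using Suc by simp
    have gs: "g (Suc k) = 1 \<or> g (Suc k) = 2" using gos Suc.prems by simp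
    from step_basic[OF st] have b: "Y (Suc k) \<subseteq> insert (Suc k) (Y k)"
      and b2: "g (Suc k) = 1 \<longrightarrow> Y (Suc k) = Y k" by auto
    show ?case
    proof (cases "g (Suc k) = 1")
      case True
      then show ?thesis using b2 IH by auto
    next
      case False
      then have "g (Suc k) = 2" using gs by simp
      then show ?thesis using b IH by force
    qed
  qed
  define Yp where "Yp = Y (j - 1)"
  define W where "W = Wm j"
  have jn: "j \<le> n" "1 \<le> j" using j by auto
  have Ypsub: "Yp \<subseteq> {1..j - 1}" using inv[of "j - 1"] jn unfolding Yp_def by simp
  have finYp: "finite Yp" using Ypsub finite_subset by blast
  have jnot: "j \<notin> Yp" using Ypsub jn by auto
  have st: "B_step p g j Yp W (Y j)" using steps[of j] j unfolding Yp_def W_def by simp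
  have c1: "\<not> (g j = 1 \<or> load p Yp \<ge> 0.75)" using step5 unfolding Yp_def by simp
  have c2: "\<not> load p Yp + p j \<le> 1.25" using step5 unfolding Yp_def by simp
  have c3: "\<not> p j \<ge> 0.75" using step5 by simp
  have c4: "\<not> p j + pmaxY p Yp > 1.25" using step5 unfolding Yp_def by simp
  have ch: "step5_choice p j Yp W" and Yj: "Y j = insert j (Yp - W)"
    using st c1 c2 c3 c4 unfolding B_step_def Let_def by (simp_all only: if_False if_True)
  have Wp: "W \<subseteq> Yp \<and> load p Yp + p j - 1.25 \<le> load p W \<and> load p W \<le> 0.75 * p j \<and> load p W < 0.5"
    using step5_W[OF finYp _ _ _ _ ch] step5 unfolding Yp_def by simp
  have lYj: "load p (Y j) = p j + (load p Yp - load p W)"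
  proof -
    have "load p (Y j) = p j + load p (Yp - W)"
      unfolding Yj load_def using finYp jnot by simp
    moreover have "load p (Yp - W) = load p Yp - load p W"
      unfolding load_def using finYp Wp by (simp add: sum_diff)
    ultimately show ?thesis by simp
  qed
  have tot: "load p {1..n} \<le> 2" by (rule total_le2[OF opt])
  have Yjsub: "Y j \<subseteq> {1..j}" using inv[of j] jn by simp
  have m1gen: "load p ({1..j'} - Y j') \<le> 2 - load p (Y j)" if "Y j \<subseteq> Y j'" "j' \<le> n" for j'
  proof -
    have sub': "Y j' \<subseteq> {1..j'}" using inv[of j'] that by simp
    have "load p {1..j'} = load p ({1..j'} - Y j') + load p (Y j')"
      unfolding load_def using sub' by (intro sum.subset_diff) auto
    moreover have "load p {1..j'} \<le> load p {1..n}"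
      using that pos by (intro load_mono) auto
    moreover have "load p (Y j) \<le> load p (Y j')"
      using that sub' pos by (intro load_mono) (auto intro: finite_subset)
    ultimately show ?thesis using tot by linarith
  qed
  have lYjb: "load p (Y j) > 0.75" using lYj Wp step5 unfolding Yp_def by auto
  have part1: "load p ({1..j} - Y j) \<le> 1.25" using m1gen[of j] jn lYjb by simp
  have part2: "load p (Y j) \<le> 1.25" using lYj Wp by auto
  have part3: "load p ({1..j'} - Y j') \<le> 1.25"
    if h: "j \<le> j'" "j' \<le> n"
      "\<forall>k\<in>{j<..j'}. ({1..k} - Y k) - ({1..k - 1} - Y (k - 1)) \<subseteq> {i. g i = 1}" for j'
  proof -
    have mono: "Y (k - 1) \<subseteq> Y k" if "k \<in> {j<..j'}" for k
    proof
      fix x assume x: "x \<in> Y (k - 1)"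
      have "Y (k - 1) \<subseteq> {1..k - 1} \<and> (\<forall>i\<in>Y (k - 1). g i = 2)"
      proof -
        have "k - 1 \<le> n" using that h(2) by auto
        then show ?thesis using inv[of "k - 1"] by blast
      qed
      then have xk: "x \<in> {1..k - 1}" "g x = 2" using x by auto
      show "x \<in> Y k"
      proof (rule ccontr)
        assume "x \<notin> Y k"
        then have "x \<in> ({1..k} - Y k) - ({1..k - 1} - Y (k - 1))" using xk x by auto
        then have "g x = 1" using h(3) that by blast
        then show False using xk by simp
      qed
    qed
    have "Y j \<subseteq> Y (j + d)" if "j + d \<le> j'" for d
      using that
    proof (induction d)
      case 0 then show ?case by simp
    next
      case (Suc d)
      have "Y (j + Suc d - 1) \<subseteq> Y (j + Suc d)" using mono[of "j + Suc d"] Suc.prems by simp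
      then show ?case using Suc by simp
    qed
    from this[of "j' - j"] have "Y j \<subseteq> Y j'" using h by simp
    then show ?thesis using m1gen[of j'] h lYjb by simp
  qed
  show ?thesis using Wp part1 part2 part3 unfolding Yp_def W_def by blast
qed

end
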